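(* Let $p>1$, $N\ge2m-1$, and let $\mathcal I\subseteq\{1,\dots,N\}$ be a nonempty index set. Then there exists a set $S_A\subseteq\mathbb R^{m\times N}$ whose complement has Lebesgue measure zero such that for each fixed $A\in S_A$, the unique optimal solution $x^*$ of $\min_{x\in\mathbb R^N}\|x\|_p$ subject to $Ax=y$ satisfies $|\mathrm{supp}(x^* )|=N$ for almost all $y\in R(A_{\bullet\mathcal I})$ (with respect to Lebesgue measure on the subspace $R(A_{\bullet\mathcal I})$).
   Context: $\|x\|_p:=(\sum_i|x_i|^p)^{1/p}$; $\mathrm{supp}(x)=\{i:x_i\ne0\}$. For an index set $\mathcal I$, $A_{\bullet\mathcal I}$ is the submatrix of $A$ formed by the columns indexed by $\mathcal I$, and $R(\cdot)$ denotes the range. *)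

theory Defs
  imports "HOL-Analysis.Analysis"
begin

definition pnorm :: "real \<Rightarrow> real ^ 'n \<Rightarrow> real" where
  "pnorm p x = (\<Sum>i\<in>UNIV. \<bar>x $ i\<bar> powr p) powr (1 / p)"

definition supp :: "real ^ 'n \<Rightarrow> 'n set" where
  "supp x = {i. x $ i \<noteq> 0}"

definition lp_optimal :: "real \<Rightarrow> real ^ 'n ^ 'm \<Rightarrow> real ^ 'm \<Rightarrow> real ^ 'n \<Rightarrow> bool" where
  "lp_optimal p A y x \<longleftrightarrow> A *v x = y \<and> (\<forall>z. A *v z = y \<longrightarrow> pnorm p x \<le> pnorm p z)"

definition col_range :: "real ^ 'n ^ 'm \<Rightarrow> 'n set \<Rightarrow> (real ^ 'm) set" where
  "col_range A I = span {column j A | j. j \<in> I}"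

text \<open>B is a null set for the (dim V)-dimensional Lebesgue measure on the linear subspace V.
  By Fubini over the orthogonal decomposition R^m = V (+) V^perp, this holds iff the
  cylinder B + V^perp is a Lebesgue null set of the ambient space.\<close>
definition subspace_null :: "'a::euclidean_space set \<Rightarrow> 'a set \<Rightarrow> bool" where
  "subspace_null V B \<longleftrightarrow> B \<subseteq> V \<and>
     {b + w | b w. b \<in> B \<and> w \<in> orthogonal_comp V} \<in> null_sets lebesgue"

definition ae_subspace :: "'a::euclidean_space set \<Rightarrow> ('a \<Rightarrow> bool) \<Rightarrow> bool" where
  "ae_subspace V P \<longleftrightarrow> subspace_null V {y \<in> V. \<not> P y}"

end

theory Submission
  imports Defs
begin


definition sp :: "real \<Rightarrow> real \<Rightarrow> real" where
  "sp e s = sgn s * \<bar>s\<bar> powr e"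

lemma sp_0[simp]: "sp e 0 = 0" by (simp add: sp_def)

lemma sp_nz: "e > 0 \<Longrightarrow> sp e s = 0 \<longleftrightarrow> s = 0"
  by (auto simp: sp_def sgn_if)

lemma sp_mono_strict:
  assumes "e > 0" "s < t" shows "sp e s < sp e t"
proof -
  consider "0 \<le> s" | "s < 0" "0 \<le> t" | "t < 0" using assms by linarith
  then show ?thesis
  proof cases
    case 1
    then have "s powr e < t powr e" using assms by (intro powr_less_mono2) auto
    then show ?thesis using 1 assms by (auto simp: sp_def sgn_if)
  next
    case 2
    have "(-s) powr e > 0" "t powr e \<ge> 0" using 2 by auto
    then show ?thesis using 2 by (auto simp: sp_def sgn_if) (smt (verit) powr_gt_zero)
  next
    case 3
    then have "(-t) powr e < (-s) powr e" using assms by (intro powr_less_mono2) auto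
    then show ?thesis using 3 assms by (auto simp: sp_def sgn_if)
  qed
qed

lemma sp_mono_iff: "e > 0 \<Longrightarrow> sp e s < sp e t \<longleftrightarrow> s < t"
  by (metis not_less_iff_gr_or_eq sp_mono_strict order.asym)

lemma sp_inj: "e > 0 \<Longrightarrow> sp e s = sp e t \<longleftrightarrow> s = t"
  by (metis sp_mono_strict not_less_iff_gr_or_eq order.irrefl)

lemma sp_prod_nonneg: "e > 0 \<Longrightarrow> (sp e s - sp e t) * (s - t) \<ge> 0"
  using sp_mono_strict[of e s t] sp_mono_strict[of e t s]
  by (cases "s < t"; cases "t < s") (auto simp: mult_nonneg_nonneg mult_nonpos_nonpos)

lemma sp_prod_zero: "e > 0 \<Longrightarrow> (sp e s - sp e t) * (s - t) = 0 \<Longrightarrow> s = t"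
  using sp_inj by auto

lemma sp_sp: assumes "e > 0" "e' * e = 1" shows "sp e' (sp e s) = s"
proof -
  have "\<bar>sp e s\<bar> = \<bar>s\<bar> powr e" by (simp add: sp_def abs_mult abs_sgn_eq)
  moreover have "sgn (sp e s) = sgn s" using assms
    by (auto simp: sp_def sgn_mult sgn_if)
  ultimately show ?thesis using assms
    by (simp add: sp_def powr_powr mult.commute abs_mult_sgn)
qed

lemma sp_times_self: "sp e s * s = \<bar>s\<bar> powr (e + 1)"
  by (cases "s = 0") (auto simp: sp_def powr_add sgn_if)

lemma abs_sp: "\<bar>sp e s\<bar> = \<bar>s\<bar> powr e"
  by (simp add: sp_def abs_mult abs_sgn_eq)

lemma continuous_sp: assumes "e > 0" shows "continuous_on UNIV (sp e)"
proof -
  have "continuous_on {0..} (\<lambda>s. s powr e)"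
    using assms by (intro continuous_on_powr') (auto intro: continuous_intros)
  moreover have "continuous_on {..0} (\<lambda>s. - ((-s) powr e))"
    using assms by (intro continuous_intros continuous_on_powr') (auto intro: continuous_intros)
  ultimately have "continuous_on ({0..} \<union> {..0}) (\<lambda>s. if s \<in> {0..} then s powr e else - ((-s) powr e))"
    by (intro continuous_on_cases) auto
  moreover have "({0..} \<union> {..0::real}) = UNIV" by auto
  moreover have "(\<lambda>s. if s \<in> {0..} then s powr e else - ((-s) powr e)) = sp e"
    by (auto simp: sp_def sgn_if fun_eq_iff)
  ultimately show ?thesis by metis
qed

lemma deriv_abs_powr:
  assumes "e > 0"
  shows "((\<lambda>s. \<bar>s\<bar> powr (e + 1) / (e + 1)) has_real_derivative sp e x) (at x)"
proof -
  consider "x > 0" | "x < 0" | "x = 0" by linarith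
  then show ?thesis
  proof cases
    case 1
    have "\<forall>\<^sub>F s in nhds x. s \<in> {0<..}" using 1 by (intro eventually_nhds_in_open) auto
    then have ev: "\<forall>\<^sub>F s in nhds x. s powr (e + 1) / (e + 1) = \<bar>s\<bar> powr (e + 1) / (e + 1)"
      by eventually_elim simp
    have "((\<lambda>s. s powr (e + 1) / (e + 1)) has_real_derivative sp e x) (at x)"
      using 1 assms
      by (auto intro!: derivative_eq_intros simp: sp_def)
    then show ?thesis using DERIV_cong_ev[OF refl ev refl] by simp
  next
    case 2
    have "\<forall>\<^sub>F s in nhds x. s \<in> {..<0}" using 2 by (intro eventually_nhds_in_open) auto
    then have ev: "\<forall>\<^sub>F s in nhds x. (-s) powr (e + 1) / (e + 1) = \<bar>s\<bar> powr (e + 1) / (e + 1)"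
      by eventually_elim simp
    have "((\<lambda>s. (-s) powr (e + 1) / (e + 1)) has_real_derivative sp e x) (at x)"
      using 2 assms
      by (auto intro!: derivative_eq_intros simp: sp_def)
    then show ?thesis using DERIV_cong_ev[OF refl ev refl] by simp
  next
    case 3
    have lim: "((\<lambda>y. \<bar>y\<bar> powr e / (e+1)) \<longlongrightarrow> 0) (at (0::real))"
    proof -
      have "((\<lambda>y::real. \<bar>y\<bar> powr e) \<longlongrightarrow> 0) (at 0)"
        using assms by (intro tendsto_zero_powrI) (auto intro!: tendsto_eq_intros)
      then show ?thesis using tendsto_divide_zero by blast
    qed
    have "((\<lambda>y. \<bar>\<bar>y\<bar> powr (e+1) / (e+1) / y\<bar>) \<longlongrightarrow> 0) (at (0::real))"
    proof (rule Lim_transform_eventually[OF lim])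
      show "\<forall>\<^sub>F y in at 0. \<bar>y\<bar> powr e / (e + 1) = \<bar>\<bar>y\<bar> powr (e+1) / (e+1) / y\<bar>"
        unfolding eventually_at
        using assms by (intro exI[of _ 1]) (auto simp: powr_add abs_divide abs_mult)
    qed
    then have "((\<lambda>y. \<bar>y\<bar> powr (e+1) / (e+1) / y) \<longlongrightarrow> 0) (at (0::real))"
      by (simp only: tendsto_rabs_zero_iff)
    then show ?thesis using 3 assms by (simp add: has_field_derivative_iff)
  qed
qed

lemma tangent_ineq:
  assumes p: "p > 1"
  shows "\<bar>b\<bar> powr p \<ge> \<bar>a\<bar> powr p + p * sp (p - 1) a * (b - a)"
proof -
  define q where "q = p / (p - 1)"
  have q: "q > 1" "1/p + 1/q = 1" using p by (auto simp: q_def field_simps)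
  have "\<bar>a\<bar> powr (p-1) * \<bar>b\<bar> \<le> (\<bar>a\<bar> powr (p-1)) powr q / q + \<bar>b\<bar> powr p / p"
    using Youngs_inequality[of q p "\<bar>a\<bar> powr (p-1)" "\<bar>b\<bar>"] q p by (auto simp: add.commute)
  also have "(\<bar>a\<bar> powr (p-1)) powr q = \<bar>a\<bar> powr p" using p by (simp add: powr_powr q_def)
  finally have Y: "\<bar>a\<bar> powr (p-1) * \<bar>b\<bar> \<le> \<bar>a\<bar> powr p / q + \<bar>b\<bar> powr p / p" .
  have "sp (p - 1) a * b \<le> \<bar>sp (p - 1) a * b\<bar>" by simp
  also have "\<dots> = \<bar>a\<bar> powr (p-1) * \<bar>b\<bar>" by (simp add: abs_mult abs_sp)
  finally have "sp (p - 1) a * b \<le> \<bar>a\<bar> powr p / q + \<bar>b\<bar> powr p / p" using Y by linarith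
  then have "p * (sp (p - 1) a * b) \<le> p * (\<bar>a\<bar> powr p / q + \<bar>b\<bar> powr p / p)"
    using p by (intro mult_left_mono) auto
  also have "\<dots> = (p - 1) * \<bar>a\<bar> powr p + \<bar>b\<bar> powr p" using p by (simp add: q_def field_simps)
  finally have *: "p * (sp (p - 1) a * b) \<le> (p - 1) * \<bar>a\<bar> powr p + \<bar>b\<bar> powr p" .
  have **: "sp (p - 1) a * a = \<bar>a\<bar> powr p" using sp_times_self[of "p-1" a] by simp
  have "p * sp (p - 1) a * (b - a) = p * (sp (p - 1) a * b) - p * (sp (p - 1) a * a)"
    by (simp add: algebra_simps)
  then show ?thesis using * ** by (simp add: algebra_simps)
qed

lemma tangent_strict:
  assumes p: "p > 1" and eq: "\<bar>b\<bar> powr p = \<bar>a\<bar> powr p + p * sp (p - 1) a * (b - a)"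
  shows "a = b"
proof (rule ccontr)
  assume ne: "a \<noteq> b"
  define c where "c = (a + b) / 2"
  define f where "f = (\<lambda>t::real. \<bar>t\<bar> powr p)"
  define g where "g = (\<lambda>t::real. p * sp (p - 1) t)"
  have T: "f y \<ge> f x + g x * (y - x)" for x y
    using tangent_ineq[OF p, of x y] by (simp add: f_def g_def mult.assoc)
  have E: "f b = f a + g a * (b - a)" using eq by (simp add: f_def g_def mult.assoc)
  have 1: "f a \<ge> f c + g c * (a - c)" by (rule T)
  have 2: "f b \<ge> f c + g c * (b - c)" by (rule T)
  have 3: "f c \<ge> f a + g a * (c - a)" by (rule T)
  have "g c * (a - c) + g c * (b - c) = 0" by (simp add: c_def algebra_simps)
  moreover have "g a * (c - a) = (g a * (b - a)) / 2" by (simp add: c_def field_simps)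
  ultimately have "f a = f c + g c * (a - c)" using 1 2 3 E by linarith
  moreover have "f c = f a + g a * (c - a)" using 1 2 3 E \<open>g a * (c - a) = _\<close> \<open>_ = 0\<close> by linarith
  ultimately have "(g c - g a) * (a - c) = 0" by (simp add: algebra_simps)
  moreover have "a \<noteq> c" using ne by (simp add: c_def)
  ultimately have "g c = g a" by simp
  then have "sp (p - 1) c = sp (p - 1) a" using p by (simp add: g_def)
  then have "c = a" using sp_inj[of "p - 1"] p by simp
  then show False using \<open>a \<noteq> c\<close> by simp
qed



definition Fm :: "real \<Rightarrow> real^'n^'m \<Rightarrow> real^'m \<Rightarrow> real^'m" where
  "Fm r A w = A *v (\<chi> i. sp r (column i A \<bullet> w))"

definition fullrank :: "real^'n^'m \<Rightarrow> bool" where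
  "fullrank A \<longleftrightarrow> (\<forall>w. (\<forall>i. column i A \<bullet> w = 0) \<longrightarrow> w = 0)"

definition good :: "real \<Rightarrow> real^'n^'m \<Rightarrow> real^'m \<Rightarrow> bool" where
  "good p A y \<longleftrightarrow> (\<exists>x. lp_optimal p A y x \<and> (\<forall>x'. lp_optimal p A y x' \<longrightarrow> x' = x)
                        \<and> card (supp x) = CARD('n))"

lemma inner_mv: "((A::real^'n^'m) *v x) \<bullet> h = (\<Sum>i\<in>UNIV. x$i * (column i A \<bullet> h))"
  by (simp add: matrix_mult_sum inner_sum_left scalar_mult_eq_scaleR)

lemma pnorm_le_iff:
  assumes "p > 0"
  shows "pnorm p x \<le> pnorm p z \<longleftrightarrow> (\<Sum>i\<in>UNIV. \<bar>x $ i\<bar> powr p) \<le> (\<Sum>i\<in>UNIV. \<bar>z $ i\<bar> powr p)"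
proof -
  have a: "(\<Sum>i\<in>UNIV. \<bar>x $ i\<bar> powr p) \<ge> 0" "(\<Sum>i\<in>UNIV. \<bar>z $ i\<bar> powr p) \<ge> 0"
    by (auto intro: sum_nonneg)
  have "a powr (1/p) \<le> b powr (1/p) \<longleftrightarrow> a \<le> b" if "a \<ge> 0" "b \<ge> 0" for a b :: real
  proof
    assume "a \<le> b" then show "a powr (1/p) \<le> b powr (1/p)" using that assms by (intro powr_mono2) auto
  next
    assume h: "a powr (1/p) \<le> b powr (1/p)"
    show "a \<le> b"
    proof (rule ccontr)
      assume "\<not> a \<le> b"
      then have "b powr (1/p) < a powr (1/p)" using that assms by (intro powr_less_mono2) auto
      then show False using h by simp
    qed
  qed
  then show ?thesis unfolding pnorm_def using a by blast
qed

lemma KKT_good: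
  assumes p: "p > 1" and nz: "\<And>i. column i A \<bullet> w \<noteq> 0"
  shows "good p (A::real^'n^'m) (Fm (1/(p-1)) A w)"
proof -
  define r where "r = 1/(p-1)"
  have r: "r > 0" "(p - 1) * r = 1" using p by (auto simp: r_def)
  define x where "x = (\<chi> i. sp r (column i A \<bullet> w))"
  have Ax: "A *v x = Fm r A w" by (simp add: Fm_def x_def)
  have spx: "sp (p - 1) (x $ i) = column i A \<bullet> w" for i
    using sp_sp[of r "p-1"] r by (simp add: x_def)
  define S where "S = (\<lambda>v::real^'n. \<Sum>i\<in>UNIV. \<bar>v $ i\<bar> powr p)"
  have key: "S z = S x + (\<Sum>i\<in>UNIV. \<bar>z$i\<bar> powr p - \<bar>x$i\<bar> powr p - p * sp (p - 1) (x$i) * (z$i - x$i))"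
    if "A *v z = A *v x" for z
  proof -
    have "(\<Sum>i\<in>UNIV. sp (p - 1) (x$i) * (z$i - x$i)) = (A *v (z - x)) \<bullet> w"
      by (simp add: inner_mv spx mult.commute)
    also have "\<dots> = 0" using that by (simp add: matrix_vector_mult_diff_distrib)
    finally have "(\<Sum>i\<in>UNIV. p * sp (p - 1) (x$i) * (z$i - x$i)) = 0"
      by (simp add: mult.assoc flip: sum_distrib_left)
    then show ?thesis by (simp add: S_def sum_subtractf)
  qed
  have nonneg: "\<bar>z$i\<bar> powr p - \<bar>x$i\<bar> powr p - p * sp (p - 1) (x$i) * (z$i - x$i) \<ge> 0" for z i
    using tangent_ineq[OF p, of "x$i" "z$i"] by simp
  have opt: "lp_optimal p A (Fm r A w) x"
    unfolding lp_optimal_def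
  proof (intro conjI allI impI)
    show "A *v x = Fm r A w" by (rule Ax)
    fix z assume "A *v z = Fm r A w"
    then have "S x \<le> S z" using key[of z] Ax nonneg by (auto intro!: sum_nonneg)
    then show "pnorm p x \<le> pnorm p z" using pnorm_le_iff[of p x z] p by (simp add: S_def)
  qed
  have uniq: "x' = x" if "lp_optimal p A (Fm r A w) x'" for x'
  proof -
    have A': "A *v x' = A *v x" using that Ax by (simp add: lp_optimal_def)
    have "pnorm p x' \<le> pnorm p x" using that Ax by (simp add: lp_optimal_def)
    then have "S x' \<le> S x" using pnorm_le_iff[of p x' x] p by (simp add: S_def)
    then have "(\<Sum>i\<in>UNIV. \<bar>x'$i\<bar> powr p - \<bar>x$i\<bar> powr p - p * sp (p - 1) (x$i) * (x'$i - x$i)) = 0"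
      using key[OF A'] nonneg[of x'] by (smt (verit) sum_nonneg)
    then have "\<forall>i\<in>UNIV. \<bar>x'$i\<bar> powr p - \<bar>x$i\<bar> powr p - p * sp (p - 1) (x$i) * (x'$i - x$i) = 0"
      using nonneg[of x'] by (subst sum_nonneg_eq_0_iff[symmetric]) auto
    then have h: "\<bar>x'$i\<bar> powr p = \<bar>x$i\<bar> powr p + p * sp (p - 1) (x$i) * (x'$i - x$i)" for i
    proof -
      have "\<bar>x'$i\<bar> powr p - \<bar>x$i\<bar> powr p - p * sp (p - 1) (x$i) * (x'$i - x$i) = 0"
        using \<open>\<forall>i\<in>UNIV. _\<close> by blast
      then show ?thesis by linarith
    qed
    have "x$i = x'$i" for i using tangent_strict[OF p h] .
    then show ?thesis by (simp add: vec_eq_iff)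
  qed
  have "supp x = UNIV" using nz r by (auto simp: supp_def x_def sp_nz)
  then have "card (supp x) = CARD('n)" by simp
  then show ?thesis using opt uniq unfolding good_def r_def by blast
qed

lemma Fm_inner_diff:
  "(Fm r A w1 - Fm r A w2) \<bullet> (w1 - w2) =
     (\<Sum>i\<in>UNIV. (sp r (column i A \<bullet> w1) - sp r (column i A \<bullet> w2)) * (column i A \<bullet> w1 - column i A \<bullet> w2))"
proof -
  have "Fm r A w1 - Fm r A w2 = A *v ((\<chi> i. sp r (column i A \<bullet> w1)) - (\<chi> i. sp r (column i A \<bullet> w2)))"
    unfolding Fm_def by (rule matrix_vector_mult_diff_distrib[symmetric])
  then show ?thesis by (simp only: inner_mv) (simp add: inner_diff_right)
qed

lemma Fm_mono_eq:
  assumes r: "r > 0" and fr: "fullrank A" and eq: "(Fm r A w1 - Fm r A w2) \<bullet> (w1 - w2) = 0"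
  shows "w1 = w2"
proof -
  define d where "d = (\<lambda>i. (sp r (column i A \<bullet> w1) - sp r (column i A \<bullet> w2)) * (column i A \<bullet> w1 - column i A \<bullet> w2))"
  have nn: "\<forall>i\<in>UNIV. d i \<ge> 0" unfolding d_def using sp_prod_nonneg[OF r] by blast
  have "sum d UNIV = 0" using eq unfolding Fm_inner_diff d_def .
  then have "\<forall>i\<in>UNIV. d i = 0" using sum_nonneg_eq_0_iff[of UNIV d] nn by simp
  then have "column i A \<bullet> w1 = column i A \<bullet> w2" for i
    using sp_prod_zero[OF r] unfolding d_def by blast
  then have "column i A \<bullet> (w1 - w2) = 0" for i
    by (simp add: inner_diff_right)
  then have "w1 - w2 = 0" using fr unfolding fullrank_def by blast
  then show ?thesis by simp
qed

lemma Fm_inj: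
  assumes "r > 0" "fullrank A" "Fm r A w1 = Fm r A w2" shows "w1 = w2"
  using Fm_mono_eq[OF assms(1,2)] assms(3) by simp



lemma coercive_bound:
  fixes A :: "real^'n^'m"
  assumes fr: "fullrank A"
  shows "\<exists>c>0. \<forall>w. \<exists>i. c * norm w \<le> \<bar>column i A \<bullet> w\<bar>"
proof -
  define T where "T = (\<lambda>w. transpose A *v w)"
  have Tc: "T w $ i = column i A \<bullet> w" for w i
    by (simp add: T_def matrix_vector_mult_def transpose_def column_def inner_vec_def mult.commute)
  have lin: "linear T" unfolding T_def by (rule matrix_vector_mul_linear)
  have "inj T"
  proof (rule injI)
    fix a b assume "T a = T b"
    then have "column i A \<bullet> (a - b) = 0" for i
      using Tc[of a i] Tc[of b i] by (simp add: inner_diff_right)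
    then show "a = b" using fr unfolding fullrank_def by (metis eq_iff_diff_eq_0)
  qed
  then obtain B where B: "B > 0" "\<And>w. B * norm w \<le> norm (T w)"
    using linear_inj_bounded_below_pos[OF lin] by blast
  define c where "c = B / real CARD('n)"
  have c: "c > 0" using B by (simp add: c_def)
  have "\<exists>i. c * norm w \<le> \<bar>column i A \<bullet> w\<bar>" for w
  proof -
    define M where "M = Max (range (\<lambda>i. \<bar>T w $ i\<bar>))"
    have "M \<in> range (\<lambda>i. \<bar>T w $ i\<bar>)" unfolding M_def by (intro Max_in) auto
    then obtain i0 where i0: "M = \<bar>T w $ i0\<bar>" by auto
    have le: "\<bar>T w $ i\<bar> \<le> M" for i unfolding M_def by (rule Max_ge) auto
    have "B * norm w \<le> (\<Sum>i\<in>UNIV. \<bar>T w $ i\<bar>)"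
      using B(2)[of w] norm_le_l1_cart[of "T w"] by linarith
    also have "\<dots> \<le> of_nat (card (UNIV::'n set)) * M"
      by (rule sum_bounded_above) (use le in auto)
    finally have "B * norm w \<le> real CARD('n) * M" by simp
    then have "c * norm w \<le> M" unfolding c_def by (simp add: field_simps)
    then show ?thesis using i0 Tc by metis
  qed
  then show ?thesis using c by blast
qed

lemma Fm_surj:
  fixes A :: "real^'n^'m"
  assumes r: "r > 0" and fr: "fullrank A"
  shows "\<exists>w. Fm r A w = y"
proof -
  define q where "q = r + 1"
  have q: "q > 1" using r by (simp add: q_def)
  define G where "G = (\<lambda>w. (\<Sum>i\<in>UNIV. \<bar>column i A \<bullet> w\<bar> powr q / q) - y \<bullet> w)"
  obtain c where c: "c > 0" "\<And>w. \<exists>i. c * norm w \<le> \<bar>column i A \<bullet> w\<bar>"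
    using coercive_bound[OF fr] by blast
  have lowG: "G w \<ge> (c * norm w) powr q / q - norm y * norm w" for w
  proof -
    obtain i where i: "c * norm w \<le> \<bar>column i A \<bullet> w\<bar>" using c(2) by blast
    have "(c * norm w) powr q \<le> \<bar>column i A \<bullet> w\<bar> powr q"
      using i c q by (intro powr_mono2) auto
    also have "\<dots> \<le> (\<Sum>i\<in>UNIV. \<bar>column i A \<bullet> w\<bar> powr q)"
      by (rule member_le_sum) auto
    finally have "(c * norm w) powr q / q \<le> (\<Sum>i\<in>UNIV. \<bar>column i A \<bullet> w\<bar> powr q / q)"
      using q by (simp add: divide_right_mono flip: sum_divide_distrib)
    moreover have "y \<bullet> w \<le> norm y * norm w" by (rule norm_cauchy_schwarz)
    ultimately show ?thesis unfolding G_def by linarith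
  qed
  define X where "X = q * (norm y + 1) / c powr q"
  have X: "X > 0" unfolding X_def using q c by (intro divide_pos_pos mult_pos_pos) (auto intro: add_nonneg_pos)
  define R where "R = X powr (1 / (q - 1)) + 1"
  have R: "R > 0" by (simp add: R_def add_nonneg_pos)
  have Gpos: "G w > 0" if "norm w \<ge> R" for w
  proof -
    define t where "t = norm w"
    have t: "t > X powr (1 / (q - 1))" "t > 0" using that R by (auto simp: t_def R_def)
    have "X = (X powr (1 / (q - 1))) powr (q - 1)" using q X by (simp add: powr_powr)
    also have "\<dots> < t powr (q - 1)" using t q by (intro powr_less_mono2) auto
    finally have tX: "X < t powr (q - 1)" .
    have tq: "t powr q = t powr (q - 1) * t"
    proof -
      have "t powr q = t powr ((q - 1) + 1)" by simp
      also have "\<dots> = t powr (q - 1) * t powr 1" by (rule powr_add)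
      finally show ?thesis using t by simp
    qed
    have "(c * t) powr q = c powr q * (t powr (q - 1) * t)"
      using c t by (simp add: powr_mult tq)
    also have "\<dots> > c powr q * (X * t)"
      using tX t c by (intro mult_strict_left_mono mult_strict_right_mono) auto
    finally have "(c * t) powr q > q * (norm y + 1) * t" using c q by (simp add: X_def)
    then have "(c * t) powr q / q > (norm y + 1) * t" using q by (simp add: field_simps)
    then have "(c * t) powr q / q - norm y * t > 0" using t by (simp add: algebra_simps)
    then show ?thesis using lowG[of w] by (simp add: t_def)
  qed
  have G0: "G 0 = 0" by (simp add: G_def)
  have contG: "continuous_on UNIV G"
    unfolding G_def by (intro continuous_intros continuous_on_powr') (use q in auto)
  obtain w0 where w0: "w0 \<in> cball 0 R" "\<And>v. v \<in> cball 0 R \<Longrightarrow> G w0 \<le> G v"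
  proof -
    have "continuous_on (cball 0 R) G" using contG by (rule continuous_on_subset) auto
    then have "\<exists>x\<in>cball 0 R. \<forall>y\<in>cball 0 R. G x \<le> G y"
      using continuous_attains_inf[of "cball 0 R" G] R by auto
    then show ?thesis using that by blast
  qed
  have glob: "G w0 \<le> G v" for v
  proof (cases "v \<in> cball 0 R")
    case True then show ?thesis using w0 by auto
  next
    case False
    then have "G v > 0" using Gpos by (simp add: dist_norm)
    moreover have "G w0 \<le> G 0" using w0 R by auto
    ultimately show ?thesis using G0 by simp
  qed
  define D where "D = (\<lambda>h. (\<Sum>i\<in>UNIV. (column i A \<bullet> h) * sp r (column i A \<bullet> w0)) - y \<bullet> h)"
  have der: "(G has_derivative D) (at w0)"
    unfolding G_def D_def
  proof (intro has_derivative_diff has_derivative_sum)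
    fix i
    have d1: "DERIV (\<lambda>s. \<bar>s\<bar> powr q / q) (column i A \<bullet> w0) :> sp r (column i A \<bullet> w0)"
      using deriv_abs_powr[OF r] by (simp add: q_def)
    have d2: "((\<lambda>w. column i A \<bullet> w) has_derivative (\<lambda>h. column i A \<bullet> h)) (at w0)"
      by (intro bounded_linear_imp_has_derivative bounded_linear_inner_right)
    show "((\<lambda>w. \<bar>column i A \<bullet> w\<bar> powr q / q) has_derivative (\<lambda>h. (column i A \<bullet> h) * sp r (column i A \<bullet> w0))) (at w0)"
      using DERIV_compose_FDERIV[OF d1 d2] .
  next
    show "((\<bullet>) y has_derivative (\<bullet>) y) (at w0)"
      by (intro bounded_linear_imp_has_derivative bounded_linear_inner_right)
  qed
  have "D = (\<lambda>h. 0)"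
    using has_derivative_local_min[OF der] glob by (auto intro: always_eventually)
  then have "D (Fm r A w0 - y) = 0" by simp
  moreover have "D h = (Fm r A w0 - y) \<bullet> h" for h
    unfolding D_def Fm_def by (simp add: inner_mv inner_diff_left mult.commute)
  ultimately have "(Fm r A w0 - y) \<bullet> (Fm r A w0 - y) = 0" by simp
  then show ?thesis by auto
qed



lemma neg_AE: "negligible X \<longleftrightarrow> (AE x in lborel. x \<notin> X)"
proof -
  have "negligible X \<longleftrightarrow> X \<in> null_sets lebesgue" by (rule negligible_iff_null_sets)
  also have "\<dots> \<longleftrightarrow> (AE x in lebesgue. x \<notin> X)"
    by (simp add: completion.AE_iff_null_sets)
  also have "\<dots> \<longleftrightarrow> (AE x in lborel. x \<notin> X)" by (rule AE_completion_iff)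
  finally show ?thesis .
qed

lemma negligible_Times_UNIV:
  fixes X :: "'a::euclidean_space set"
  assumes "negligible X"
  shows "negligible (X \<times> (UNIV::'b::euclidean_space set))"
proof -
  have "AE x in lborel. x \<notin> X" using assms unfolding neg_AE .
  then obtain N where N0: "{x \<in> space lborel. \<not> x \<notin> X} \<subseteq> N" "emeasure lborel N = 0" "N \<in> sets lborel"
    by (rule AE_E)
  then have N: "N \<in> null_sets lborel" "{x \<in> space lborel. \<not> x \<notin> X} \<subseteq> N"
    by (auto intro: null_setsI)
  have "N \<times> (UNIV::'b set) \<in> null_sets (lborel \<Otimes>\<^sub>M lborel)"
    using N by (intro lborel.times_in_null_sets1) auto
  then have "N \<times> (UNIV::'b set) \<in> null_sets lborel" by (simp add: lborel_prod)
  then have "AE z in lborel. z \<notin> N \<times> (UNIV::'b set)" by (rule AE_not_in)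
  then have "AE z in lborel. z \<notin> X \<times> (UNIV::'b set)"
    by (rule eventually_mono) (use N in auto)
  then show ?thesis unfolding neg_AE .
qed

lemma negligible_Times_UNIV_rev:
  fixes X :: "'a::euclidean_space set"
  assumes "negligible (X \<times> (UNIV::'b::euclidean_space set))"
  shows "negligible X"
proof -
  have "AE z in lborel. z \<notin> X \<times> (UNIV::'b set)"
    using assms unfolding neg_AE .
  then have "AE z in (lborel \<Otimes>\<^sub>M lborel). z \<notin> X \<times> (UNIV::'b set)"
    unfolding lborel_prod .
  then have "AE x in lborel. AE y in (lborel::'b measure). (x, y) \<notin> X \<times> (UNIV::'b set)"
    by (rule lborel_pair.AE_pair)
  moreover have "\<not> (AE y in (lborel::'b measure). y \<notin> UNIV)"
  proof -
    have "UNIV \<notin> null_sets (lborel::'b measure)" by (simp add: null_sets_def)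
    then show ?thesis using AE_iff_null_sets[of UNIV "lborel::'b measure"] by simp
  qed
  ultimately have "AE x in lborel. x \<notin> X"
  proof (elim eventually_mono)
    fix x assume h: "AE y in (lborel::'b measure). (x, y) \<notin> X \<times> (UNIV::'b set)"
      and nn: "\<not> (AE y in (lborel::'b measure). y \<notin> UNIV)"
    show "x \<notin> X"
    proof
      assume "x \<in> X"
      then have "AE y in (lborel::'b measure). y \<notin> UNIV" using h by (rule_tac eventually_mono) auto
      then show False using nn by simp
    qed
  qed
  then show ?thesis unfolding neg_AE .
qed

lemma negligible_linear_image_le:
  fixes f :: "'a::euclidean_space \<Rightarrow> 'b::euclidean_space"
  assumes "linear f" "DIM('a) \<le> DIM('b)" "negligible S"
  shows "negligible (f ` S)"
  using negligible_differentiable_image_negligible[OF assms(2,3)] linear_imp_differentiable_on[OF assms(1)]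
  by blast

lemma dir_null:
  fixes E :: "'a::euclidean_space set"
  assumes E: "E \<in> sets borel" and sec: "\<And>x. countable {s::real. x + s *\<^sub>R v \<in> E}"
  shows "negligible E"
proof -
  define f where "f = (\<lambda>(x::'a, s::real). x + s *\<^sub>R v)"
  define T where "T = f -` E"
  have "continuous_on UNIV f" unfolding f_def case_prod_beta by (intro continuous_intros)
  then have "f \<in> borel_measurable borel" by (rule borel_measurable_continuous_onI)
  then have "T \<in> sets borel" using measurable_sets_borel[OF _ E] by (simp add: T_def)
  then have Tm: "T \<in> sets (lborel \<Otimes>\<^sub>M lborel)" unfolding lborel_prod by simp
  have "emeasure (lborel \<Otimes>\<^sub>M lborel) T = (\<integral>\<^sup>+x. emeasure lborel (Pair x -` T) \<partial>lborel)"
    by (rule lborel.emeasure_pair_measure_alt[OF Tm])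
  also have "\<dots> = 0"
  proof -
    have "emeasure lborel (Pair x -` T) = 0" for x
    proof -
      have "Pair x -` T = {s. x + s *\<^sub>R v \<in> E}" by (auto simp: T_def f_def)
      then show ?thesis
        using countable_imp_null_set_lborel[OF sec[of x]] by (simp add: null_sets_def)
    qed
    then show ?thesis by simp
  qed
  finally have "T \<in> null_sets (lborel \<Otimes>\<^sub>M lborel)" using Tm by (simp add: null_sets_def)
  then have "T \<in> null_sets lborel" by (simp add: lborel_prod)
  then have negT: "negligible T" unfolding neg_AE by (rule AE_not_in)
  define g where "g = (\<lambda>(x::'a, s::real). (x + s *\<^sub>R v, s))"
  have lg: "linear g" unfolding g_def
    unfolding case_prod_beta by (intro linearI) (auto simp: algebra_simps)
  have "E \<times> UNIV = g ` T"
  proof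
    show "g ` T \<subseteq> E \<times> UNIV" by (auto simp: g_def T_def f_def)
    show "E \<times> UNIV \<subseteq> g ` T"
    proof clarify
      fix e s assume "e \<in> E"
      then have "(e - s *\<^sub>R v, s) \<in> T" by (simp add: T_def f_def)
      moreover have "g (e - s *\<^sub>R v, s) = (e, s)" by (simp add: g_def)
      ultimately show "(e, s) \<in> g ` T" by force
    qed
  qed
  then have "negligible (E \<times> (UNIV::real set))"
    using negligible_linear_image_le[OF lg _ negT] by simp
  then show ?thesis by (rule negligible_Times_UNIV_rev)
qed

lemma surj_lin_negligible:
  fixes \<Psi> :: "'a::euclidean_space \<Rightarrow> 'b::euclidean_space"
  assumes lin: "linear \<Psi>" and su: "surj \<Psi>" and dims: "DIM('a) = DIM('b) + DIM('c::euclidean_space)"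
    and neg: "negligible (\<Psi> -` X)"
  shows "negligible X"
proof -
  define K where "K = \<Psi> -` {0}"
  define R where "R = range (adjoint \<Psi>)"
  have la: "linear (adjoint \<Psi>)" by (rule adjoint_linear[OF lin])
  have injA: "inj (adjoint \<Psi>)"
  proof (rule linear_injective_0[OF la, THEN iffD2], intro allI impI)
    fix y assume y: "adjoint \<Psi> y = 0"
    obtain x where x: "\<Psi> x = y" using su by (metis surjD)
    have "x \<bullet> adjoint \<Psi> y = \<Psi> x \<bullet> y" by (rule adjoint_works[OF lin])
    then have "y \<bullet> y = 0" using y x by simp
    then show "y = 0" by simp
  qed
  have dimR: "dim R = DIM('b)"
    unfolding R_def using dim_image_eq[OF la, of UNIV] injA by (simp add: inj_on_def)
  have subR: "subspace R" unfolding R_def using linear_subspace_image[OF la subspace_UNIV] by simp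
  have KR: "K = R\<^sup>\<bottom>" unfolding K_def R_def using ker_orthogonal_comp_adjoint[OF lin] by simp
  have "dim {y \<in> UNIV. \<forall>x \<in> R. orthogonal x y} + dim R = dim (UNIV::'a set)"
    by (rule dim_subspace_orthogonal_to_vectors[OF subR subspace_UNIV]) simp
  moreover have "{y \<in> UNIV. \<forall>x \<in> R. orthogonal x y} = K"
    unfolding KR orthogonal_comp_def by auto
  ultimately have dimK: "dim K = DIM('c)" using dimR dims by simp
  have subK: "subspace K" unfolding KR by (rule subspace_orthogonal_comp)
  obtain f :: "'a \<Rightarrow> 'c" and g where fg: "linear f" "linear g" "f ` K = UNIV" "\<And>x. x \<in> K \<Longrightarrow> g (f x) = x"
  proof -
    have "dim K = dim (UNIV::'c set)" using dimK by simp
    then show ?thesis using isometries_subspaces[OF subK subspace_UNIV] that by metis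
  qed
  define L where "L = (\<lambda>a. (\<Psi> a, f a))"
  have lL: "linear L" unfolding L_def using lin fg(1)
    by (auto simp: linear_iff)
  have injL: "inj L"
  proof (rule linear_injective_0[OF lL, THEN iffD2], intro allI impI)
    fix a assume "L a = 0"
    then have "a \<in> K" "f a = 0" by (auto simp: L_def K_def zero_prod_def)
    then show "a = 0" using fg(4)[of a] linear_0[OF fg(2)] by simp
  qed
  have "dim (range L) = dim (UNIV::'a set)"
    using dim_image_eq[OF lL, of UNIV] injL by (simp add: inj_on_def)
  then have "dim (range L) = DIM('b \<times> 'c)" using dims by simp
  then have "span (range L) = UNIV" using dim_eq_full[of "range L"] by simp
  moreover have "subspace (range L)" using linear_subspace_image[OF lL subspace_UNIV] by simp
  ultimately have surjL: "range L = UNIV" by (metis span_eq_iff)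
  have "X \<times> UNIV = L ` (\<Psi> -` X)"
  proof
    show "L ` (\<Psi> -` X) \<subseteq> X \<times> UNIV" by (auto simp: L_def)
    show "X \<times> UNIV \<subseteq> L ` (\<Psi> -` X)"
    proof clarify
      fix x c assume "x \<in> X"
      obtain a where a: "L a = (x, c)" using surjL by (metis UNIV_I imageE)
      then have "\<Psi> a = x" by (simp add: L_def)
      then show "(x, c) \<in> L ` (\<Psi> -` X)" using a \<open>x \<in> X\<close> by force
    qed
  qed
  then have "negligible (X \<times> (UNIV::'c set))"
    using negligible_linear_image_le[OF lL _ neg] dims by simp
  then show ?thesis by (rule negligible_Times_UNIV_rev)
qed



lemma det_nz_ker:
  fixes M :: "real^'m^'m"
  assumes "det M \<noteq> 0" "M *v x = 0" shows "x = 0"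
proof -
  have "inj ((*v) M)"
    using det_nz_iff_inj[OF matrix_vector_mul_linear[of M]] assms(1)
    by (simp add: matrix_of_matrix_vector_mul)
  then show ?thesis using assms(2) by (metis injD matrix_vector_mult_0_right)
qed

lemma det_zero_ker:
  fixes M :: "real^'m^'m"
  assumes "det M = 0" shows "\<exists>x. x \<noteq> 0 \<and> M *v x = 0"
proof -
  have "\<not> inj ((*v) M)"
    using det_nz_iff_inj[OF matrix_vector_mul_linear[of M]] assms
    by (simp add: matrix_of_matrix_vector_mul)
  then obtain a b where "a \<noteq> b" "M *v a = M *v b" by (auto simp: inj_def)
  then show ?thesis by (intro exI[of _ "a - b"]) (simp add: matrix_vector_mult_diff_distrib)
qed

definition Msub :: "('m \<Rightarrow> 'n) \<Rightarrow> real^'n^'m \<Rightarrow> real^'m^'m" where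
  "Msub \<tau> A = (\<chi> a l. A$a$(\<tau> l))"

lemma det_fullrank:
  fixes A :: "real^'n^'m"
  assumes "det (Msub \<tau> A) \<noteq> 0" shows "fullrank A"
  unfolding fullrank_def
proof (intro allI impI)
  fix w assume h: "\<forall>i. column i A \<bullet> w = 0"
  have "transpose (Msub \<tau> A) *v w = 0"
  proof -
    have "(transpose (Msub \<tau> A) *v w) $ l = column (\<tau> l) A \<bullet> w" for l
      by (simp add: Msub_def transpose_def matrix_vector_mult_def column_def inner_vec_def mult.commute)
    then show ?thesis using h by (simp add: vec_eq_iff)
  qed
  moreover have "det (transpose (Msub \<tau> A)) \<noteq> 0" using assms by (simp add: det_transpose)
  ultimately show "w = 0" using det_nz_ker by blast
qed

lemma eigvec_indep:
  fixes M :: "real^'m^'m"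
  assumes "finite S" "\<And>s. s \<in> S \<Longrightarrow> ev s \<noteq> 0 \<and> M *v ev s = s *\<^sub>R ev s"
  shows "independent (ev ` S) \<and> inj_on ev S"
  using assms
proof (induction S rule: finite_induct)
  case empty
  then show ?case by (simp add: independent_empty)
next
  case (insert \<mu> S)
  have IH0: "independent (ev ` S) \<and> inj_on ev S"
    by (rule insert.IH) (use insert.prems in blast)
  then have IH: "independent (ev ` S)" "inj_on ev S" by blast+
  have fin: "finite (ev ` S)" using insert by simp
  have evm: "ev \<mu> \<noteq> 0" "M *v ev \<mu> = \<mu> *\<^sub>R ev \<mu>" using insert.prems by auto
  have notin: "ev \<mu> \<notin> span (ev ` S)"
  proof
    assume "ev \<mu> \<in> span (ev ` S)"
    then obtain c where c: "ev \<mu> = (\<Sum>v\<in>ev ` S. c v *\<^sub>R v)"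
      using span_finite[OF fin] by auto
    have c2: "ev \<mu> = (\<Sum>s\<in>S. c (ev s) *\<^sub>R ev s)"
      using c sum.reindex[OF IH(2), of "\<lambda>v. c v *\<^sub>R v"] by simp
    have lM: "linear ((*v) M)" by (rule matrix_vector_mul_linear)
    have "M *v ev \<mu> = (\<Sum>s\<in>S. c (ev s) *\<^sub>R (M *v ev s))"
      unfolding c2 by (simp add: linear_sum[OF lM] linear_cmul[OF lM])
    also have "\<dots> = (\<Sum>s\<in>S. (c (ev s) * s) *\<^sub>R ev s)"
      using insert.prems by (intro sum.cong) auto
    finally have Mev: "M *v ev \<mu> = (\<Sum>s\<in>S. (c (ev s) * s) *\<^sub>R ev s)" .
    moreover have muev: "\<mu> *\<^sub>R ev \<mu> = (\<Sum>s\<in>S. (c (ev s) * \<mu>) *\<^sub>R ev s)"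
      unfolding c2 by (simp add: scaleR_sum_right mult.commute)
    ultimately have "(\<Sum>s\<in>S. (c (ev s) * (s - \<mu>)) *\<^sub>R ev s) = 0"
    proof -
      have "(\<Sum>s\<in>S. (c (ev s) * (s - \<mu>)) *\<^sub>R ev s) =
            (\<Sum>s\<in>S. (c (ev s) * s) *\<^sub>R ev s) - (\<Sum>s\<in>S. (c (ev s) * \<mu>) *\<^sub>R ev s)"
        by (simp add: algebra_simps flip: sum_subtractf)
      also have "\<dots> = M *v ev \<mu> - \<mu> *\<^sub>R ev \<mu>" by (simp only: Mev muev)
      also have "\<dots> = 0" using evm(2) by simp
      finally show ?thesis .
    qed
    then have z: "(\<Sum>v\<in>ev ` S. (c v * (inv_into S ev v - \<mu>)) *\<^sub>R v) = 0"
      using sum.reindex[OF IH(2), of "\<lambda>v. (c v * (inv_into S ev v - \<mu>)) *\<^sub>R v"] IH(2)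
      by (simp add: inv_into_f_f)
    have ind: "\<forall>d. (\<Sum>v\<in>ev ` S. d v *\<^sub>R v) = 0 \<longrightarrow> (\<forall>v\<in>ev ` S. d v = 0)"
      using IH(1) by (simp add: independent_explicit)
    have zz: "\<forall>v\<in>ev ` S. c v * (inv_into S ev v - \<mu>) = 0"
      by (rule mp[OF spec[OF ind, of "\<lambda>v. c v * (inv_into S ev v - \<mu>)"]]) (rule z)
    have cz: "c (ev s) = 0" if "s \<in> S" for s
    proof -
      have "c (ev s) * (inv_into S ev (ev s) - \<mu>) = 0"
        using zz that by blast
      moreover have "inv_into S ev (ev s) = s" using IH(2) that by (simp add: inv_into_f_f)
      moreover have "s \<noteq> \<mu>" using that insert.hyps by auto
      ultimately show ?thesis by simp
    qed
    have "(\<Sum>s\<in>S. c (ev s) *\<^sub>R ev s) = 0" by (rule sum.neutral) (simp add: cz)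
    then have "ev \<mu> = 0" using c2 by (simp only:)
    then show False using evm by simp
  qed
  have "ev \<mu> \<notin> ev ` S" using notin span_base by metis
  then show ?case using IH notin by (auto simp: independent_insert)
qed

lemma finite_eigenvalues:
  fixes M :: "real^'m^'m"
  shows "finite {s. \<exists>x. x \<noteq> 0 \<and> M *v x = s *\<^sub>R x}"
proof (rule ccontr)
  define E where "E = {s. \<exists>x. x \<noteq> 0 \<and> M *v x = s *\<^sub>R x}"
  assume "\<not> finite {s. \<exists>x. x \<noteq> 0 \<and> M *v x = s *\<^sub>R x}"
  then have "infinite E" by (simp add: E_def)
  then obtain S where S: "S \<subseteq> E" "finite S" "card S = Suc CARD('m)"
    using infinite_arbitrarily_large by blast
  define ev where "ev = (\<lambda>s. SOME x. x \<noteq> 0 \<and> M *v x = s *\<^sub>R x)"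
  have "ev s \<noteq> 0 \<and> M *v ev s = s *\<^sub>R ev s" if "s \<in> S" for s
  proof -
    have "\<exists>x. x \<noteq> 0 \<and> M *v x = s *\<^sub>R x" using S(1) that unfolding E_def by auto
    from someI_ex[OF this] show ?thesis unfolding ev_def .
  qed
  then have "independent (ev ` S) \<and> inj_on ev S" using eigvec_indep[OF S(2)] by blast
  then have "card (ev ` S) \<le> DIM(real^'m)" "card (ev ` S) = card S"
    using independent_bound[of "ev ` S"] card_image by auto
  then show False using S(3) by simp
qed

lemma continuous_det: "continuous_on UNIV (det :: real^'m^'m \<Rightarrow> real)"
  unfolding det_def by (intro continuous_intros)



definition Vt :: "('m \<Rightarrow> 'n) \<Rightarrow> real^'n^'m" where
  "Vt \<tau> = (\<chi> a b. if b = \<tau> a then 1 else 0)"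

lemma Msub_add_Vt:
  assumes "inj \<tau>"
  shows "Msub \<tau> (A + s *\<^sub>R Vt \<tau>) = Msub \<tau> A + s *\<^sub>R mat 1"
  using assms by (simp add: Msub_def Vt_def vec_eq_iff mat_def inj_eq)

lemma continuous_Msub: "continuous_on UNIV (\<lambda>A::real^'n^'m. Msub \<tau> A)"
  unfolding Msub_def by (intro continuous_intros)

lemma negligible_det_zero:
  assumes "inj (\<tau> :: 'm \<Rightarrow> 'n)"
  shows "negligible {A :: real^'n^'m. det (Msub \<tau> A) = 0}"
proof (rule dir_null[where v = "Vt \<tau>"])
  have "continuous_on UNIV (\<lambda>A::real^'n^'m. det (Msub \<tau> A))"
    using continuous_on_compose2[OF continuous_det continuous_Msub] by auto
  then have "closed {A :: real^'n^'m. det (Msub \<tau> A) = 0}"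
    using closed_Collect_eq[of "\<lambda>A::real^'n^'m. det (Msub \<tau> A)" "\<lambda>_. 0"] by (auto intro: continuous_intros)
  then show "{A :: real^'n^'m. det (Msub \<tau> A) = 0} \<in> sets borel" by (rule borel_closed)
next
  fix A :: "real^'n^'m"
  have "{s. A + s *\<^sub>R Vt \<tau> \<in> {A. det (Msub \<tau> A) = 0}} \<subseteq> uminus ` {s. \<exists>x. x \<noteq> 0 \<and> Msub \<tau> A *v x = s *\<^sub>R x}"
  proof
    fix s assume "s \<in> {s. A + s *\<^sub>R Vt \<tau> \<in> {A. det (Msub \<tau> A) = 0}}"
    then have "det (Msub \<tau> A + s *\<^sub>R mat 1) = 0" using Msub_add_Vt[OF assms] by simp
    then obtain x where x: "x \<noteq> 0" "(Msub \<tau> A + s *\<^sub>R mat 1) *v x = 0" using det_zero_ker by blast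
    moreover have "(s *\<^sub>R mat 1) *v x = s *\<^sub>R x"
      by (simp flip: scaleR_matrix_vector_assoc)
    ultimately have "Msub \<tau> A *v x = (- s) *\<^sub>R x"
      by (simp add: matrix_vector_mult_add_rdistrib add_eq_0_iff)
    then show "s \<in> uminus ` {s. \<exists>x. x \<noteq> 0 \<and> Msub \<tau> A *v x = s *\<^sub>R x}"
      using x(1) by (intro image_eqI[of _ _ "-s"]) auto
  qed
  moreover have "finite (uminus ` {s. \<exists>x. x \<noteq> 0 \<and> Msub \<tau> A *v x = s *\<^sub>R x})"
    using finite_eigenvalues by blast
  ultimately show "countable {s. A + s *\<^sub>R Vt \<tau> \<in> {A. det (Msub \<tau> A) = 0}}"
    by (meson countable_finite finite_subset)
qed

definition Eij :: "'m \<Rightarrow> 'n \<Rightarrow> real^'n^'m" where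
  "Eij a i = (\<chi> a' b. if a' = a \<and> b = i then 1 else 0)"

lemma negligible_entry_zero:
  shows "negligible {A :: real^'n^'m. A$a$i = 0}"
proof (rule dir_null[where v = "Eij a i"])
  have "continuous_on UNIV (\<lambda>A::real^'n^'m. A$a$i)" by (intro continuous_intros)
  then have "closed {A :: real^'n^'m. A$a$i = 0}"
    using closed_Collect_eq[of "\<lambda>A::real^'n^'m. A$a$i" "\<lambda>_. 0"] by (auto intro: continuous_intros)
  then show "{A :: real^'n^'m. A$a$i = 0} \<in> sets borel" by (rule borel_closed)
next
  fix A :: "real^'n^'m"
  have "{s. A + s *\<^sub>R Eij a i \<in> {A. A$a$i = 0}} \<subseteq> {- (A$a$i)}"
    by (auto simp: Eij_def)
  then show "countable {s. A + s *\<^sub>R Eij a i \<in> {A. A$a$i = 0}}"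
    by (meson countable_finite finite_subset finite.intros)
qed



definition PI :: "'n set \<Rightarrow> real^'n \<Rightarrow> real^'n" where
  "PI I u = (\<chi> i. (if i \<in> I then 1 else 0) * u$i)"

definition Zc :: "'n \<Rightarrow> real^'n^'m \<Rightarrow> real^'n^'m" where
  "Zc j A = (\<chi> a b. if b = j then 0 else A$a$b)"

lemma continuous_on_sp[continuous_intros]:
  assumes "r > 0" "continuous_on S f"
  shows "continuous_on S (\<lambda>x. sp r (f x))"
  using continuous_on_compose2[OF continuous_sp[OF assms(1)] assms(2)] by auto

lemma Fm_expand: "Fm r A w = (\<chi> a. \<Sum>b\<in>UNIV. A$a$b * sp r (\<Sum>c\<in>UNIV. A$c$b * w$c))"
  by (simp add: Fm_def matrix_vector_mult_def column_def inner_vec_def)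

lemma Fm_cont:
  assumes "r > 0" "continuous_on S fA" "continuous_on S fw"
  shows "continuous_on S (\<lambda>z. Fm r (fA z) (fw z))"
  unfolding Fm_expand using assms by (intro continuous_intros)

lemma column_inner_expand: "column b A \<bullet> w = (\<Sum>c\<in>UNIV. A$c$b * w$c)"
  by (simp add: column_def inner_vec_def)

lemma Fm_Zc:
  assumes "column j A \<bullet> w = 0"
  shows "Fm r A w = Fm r (Zc j A) w"
proof -
  have "A$a$b * sp r (column b A \<bullet> w) = Zc j A$a$b * sp r (column b (Zc j A) \<bullet> w)" for a b
  proof (cases "b = j")
    case True then show ?thesis using assms by (simp add: Zc_def)
  next
    case False
    then have "column b (Zc j A) = column b A" by (simp add: Zc_def column_def vec_eq_iff)
    then show ?thesis using False by (simp add: Zc_def)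
  qed
  then show ?thesis by (simp add: Fm_def matrix_vector_mult_def vec_eq_iff)
qed

lemma Zc_add_E: "Zc j (A + s *\<^sub>R Eij k j) = Zc j A"
  by (simp add: Zc_def Eij_def vec_eq_iff)

lemma PI_add_E:
  assumes "j \<notin> I" shows "(A + s *\<^sub>R Eij k j) *v PI I u = A *v PI I u"
proof -
  have "(A + s *\<^sub>R Eij k j)$i$b * PI I u $ b = A$i$b * PI I u $ b" for i b
    using assms by (cases "b = j") (auto simp: PI_def Eij_def)
  then have "((A + s *\<^sub>R Eij k j) *v PI I u)$i = (A *v PI I u)$i" for i
    unfolding matrix_vector_mult_def vec_lambda_beta by (intro sum.cong) auto
  then show ?thesis by (simp add: vec_eq_iff)
qed

lemma Msub_add_E: "j \<notin> range \<tau> \<Longrightarrow> Msub \<tau> (A + s *\<^sub>R Eij k j) = Msub \<tau> A"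
  by (auto simp: Msub_def Eij_def vec_eq_iff)

lemma Msub_Zc: "j \<notin> range \<tau> \<Longrightarrow> Msub \<tau> (Zc j A) = Msub \<tau> A"
  by (auto simp: Msub_def Zc_def vec_eq_iff)

lemma column_add_E: "column j (A + s *\<^sub>R Eij k j) \<bullet> w = column j A \<bullet> w + s * w$k"
proof -
  have "(A + s *\<^sub>R Eij k j)$c$j * w$c = A$c$j * w$c + (if c = k then s * w$c else 0)" for c
    by (simp add: Eij_def algebra_simps)
  then have "column j (A + s *\<^sub>R Eij k j) \<bullet> w = (\<Sum>c\<in>UNIV. A$c$j * w$c) + (\<Sum>c\<in>UNIV. if c = k then s * w$c else 0)"
    by (simp add: column_inner_expand sum.distrib)
  then show ?thesis by (simp add: column_inner_expand)
qed

lemma countable_subsingleton: "(\<And>x y. x \<in> S \<Longrightarrow> y \<in> S \<Longrightarrow> x = y) \<Longrightarrow> countable S"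
proof -
  assume h: "\<And>x y. x \<in> S \<Longrightarrow> y \<in> S \<Longrightarrow> x = y"
  show "countable S"
  proof (cases "S = {}")
    case False
    then obtain x where "x \<in> S" by blast
    then have "S = {x}" using h by blast
    then show ?thesis by simp
  qed simp
qed

lemma negligible_outside_piece:
  fixes \<tau> :: "'m::finite \<Rightarrow> 'n::finite" and I :: "'n set"
  assumes r: "r > 0" and jI: "j \<notin> I" and jt: "j \<notin> range \<tau>"
  shows "negligible {(A :: real^'n^'m, u :: real^'n). det (Msub \<tau> A) \<noteq> 0 \<and>
            (\<exists>w. Fm r A w = A *v PI I u \<and> column j A \<bullet> w = 0 \<and> w$k \<noteq> 0)}"
proof -
  define K where "K = (\<lambda>n::nat. {z :: ((real^'n^'m) \<times> (real^'n)) \<times> (real^'m).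
     1 / real (Suc n) \<le> \<bar>det (Msub \<tau> (fst (fst z)))\<bar> \<and> 1 / real (Suc n) \<le> \<bar>snd z $ k\<bar> \<and>
     Fm r (fst (fst z)) (snd z) = fst (fst z) *v PI I (snd (fst z)) \<and>
     column j (fst (fst z)) \<bullet> snd z = 0} \<inter> cball 0 (real n))"
  define P where "P = (\<lambda>n. fst ` K n)"
  have cK: "compact (K n)" for n
  proof -
    have c1: "continuous_on UNIV (\<lambda>z :: ((real^'n^'m) \<times> (real^'n)) \<times> (real^'m). \<bar>det (Msub \<tau> (fst (fst z)))\<bar>)"
      unfolding det_def Msub_def by (intro continuous_intros)
    have c2: "continuous_on UNIV (\<lambda>z :: ((real^'n^'m) \<times> (real^'n)) \<times> (real^'m). \<bar>snd z $ k\<bar>)"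
      by (intro continuous_intros)
    have c3: "continuous_on UNIV (\<lambda>z :: ((real^'n^'m) \<times> (real^'n)) \<times> (real^'m). Fm r (fst (fst z)) (snd z))"
      using r by (intro Fm_cont continuous_intros)
    have c4: "continuous_on UNIV (\<lambda>z :: ((real^'n^'m) \<times> (real^'n)) \<times> (real^'m). fst (fst z) *v PI I (snd (fst z)))"
      unfolding matrix_vector_mult_def PI_def by (intro continuous_intros)
    have c5: "continuous_on UNIV (\<lambda>z :: ((real^'n^'m) \<times> (real^'n)) \<times> (real^'m). column j (fst (fst z)) \<bullet> snd z)"
      unfolding column_inner_expand by (intro continuous_intros)
    have "closed {z :: ((real^'n^'m) \<times> (real^'n)) \<times> (real^'m).
     1 / real (Suc n) \<le> \<bar>det (Msub \<tau> (fst (fst z)))\<bar> \<and> 1 / real (Suc n) \<le> \<bar>snd z $ k\<bar> \<and>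
     Fm r (fst (fst z)) (snd z) = fst (fst z) *v PI I (snd (fst z)) \<and>
     column j (fst (fst z)) \<bullet> snd z = 0}"
      using closed_Collect_le[OF continuous_on_const c1] closed_Collect_le[OF continuous_on_const c2]
        closed_Collect_eq[OF c3 c4] closed_Collect_eq[OF c5 continuous_on_const]
      by (intro closed_Collect_conj) auto
    then show ?thesis unfolding K_def by (rule closed_Int_compact[OF _ compact_cball])
  qed
  have negP: "negligible (P n)" for n
  proof (rule dir_null[where v = "(Eij k j, 0)"])
    have "compact (P n)" unfolding P_def using cK
      by (intro compact_continuous_image continuous_intros) auto
    then show "P n \<in> sets borel" by (intro borel_closed compact_imp_closed)
  next
    fix x :: "(real^'n^'m) \<times> (real^'n)"
    obtain A u where x: "x = (A, u)" by fastforce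
    show "countable {s. x + s *\<^sub>R (Eij k j, 0) \<in> P n}"
    proof (rule countable_subsingleton)
      fix s1 s2 assume s1: "s1 \<in> {s. x + s *\<^sub>R (Eij k j, 0) \<in> P n}"
        and s2: "s2 \<in> {s. x + s *\<^sub>R (Eij k j, 0) \<in> P n}"
      have mem: "\<exists>w. det (Msub \<tau> A) \<noteq> 0 \<and> Fm r (Zc j A) w = A *v PI I u \<and>
                    column j A \<bullet> w + s * w$k = 0 \<and> w$k \<noteq> 0"
        if "s \<in> {s. x + s *\<^sub>R (Eij k j, 0) \<in> P n}" for s
      proof -
        have "(A + s *\<^sub>R Eij k j, u) \<in> fst ` K n" using that unfolding P_def x by simp
        then obtain z where z: "z \<in> K n" "fst z = (A + s *\<^sub>R Eij k j, u)" by force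
        then have w: "((A + s *\<^sub>R Eij k j, u), snd z) \<in> K n" by (metis prod.collapse)
        define w where "w = snd z"
        note w = w[folded w_def]
        have pos: "1 / real (Suc n) > 0" by simp
        have d: "det (Msub \<tau> A) \<noteq> 0"
          using w pos Msub_add_E[OF jt, of A s k] unfolding K_def by auto
        have cj: "column j (A + s *\<^sub>R Eij k j) \<bullet> w = 0" using w unfolding K_def by auto
        have "Fm r (A + s *\<^sub>R Eij k j) w = A *v PI I u"
          using w PI_add_E[OF jI] unfolding K_def by auto
        then have "Fm r (Zc j A) w = A *v PI I u"
          using Fm_Zc[OF cj] Zc_add_E by metis
        moreover have "w$k \<noteq> 0" using w pos unfolding K_def by auto
        ultimately show ?thesis using d cj column_add_E by metis
      qed
      obtain w1 where w1: "det (Msub \<tau> A) \<noteq> 0" "Fm r (Zc j A) w1 = A *v PI I u"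
          "column j A \<bullet> w1 + s1 * w1$k = 0" "w1$k \<noteq> 0"
        using mem[OF s1] by blast
      obtain w2 where w2: "Fm r (Zc j A) w2 = A *v PI I u"
          "column j A \<bullet> w2 + s2 * w2$k = 0"
        using mem[OF s2] by blast
      have "fullrank (Zc j A)" using det_fullrank[of \<tau> "Zc j A"] w1(1) Msub_Zc[OF jt] by simp
      then have "w1 = w2" using Fm_inj[OF r] w1(2) w2(1) by metis
      then have "column j A \<bullet> w1 + s2 * w1$k = 0" using w2(2) by simp
      then have "s1 * w1$k = s2 * w1$k" using w1(3) by linarith
      then show "s1 = s2" using w1(4) by simp
    qed
  qed
  have sub: "{(A :: real^'n^'m, u :: real^'n). det (Msub \<tau> A) \<noteq> 0 \<and>
            (\<exists>w. Fm r A w = A *v PI I u \<and> column j A \<bullet> w = 0 \<and> w$k \<noteq> 0)} \<subseteq> (\<Union>n. P n)"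
  proof clarify
    fix A :: "real^'n^'m" and u :: "real^'n" and w :: "real^'m"
    assume h: "det (Msub \<tau> A) \<noteq> 0" "Fm r A w = A *v PI I u" "column j A \<bullet> w = 0" "w$k \<noteq> 0"
    obtain n1 where n1: "inverse (real (Suc n1)) < \<bar>det (Msub \<tau> A)\<bar>"
      using reals_Archimedean[of "\<bar>det (Msub \<tau> A)\<bar>"] h(1) by auto
    obtain n2 where n2: "inverse (real (Suc n2)) < \<bar>w$k\<bar>"
      using reals_Archimedean[of "\<bar>w$k\<bar>"] h(4) by auto
    obtain n3 where n3: "norm ((A, u), w) \<le> real n3" using real_arch_simple by blast
    define n where "n = max n1 (max n2 n3)"
    have "1 / real (Suc n) \<le> inverse (real (Suc n1))"
      by (simp add: n_def divide_inverse le_imp_inverse_le)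
    moreover have "1 / real (Suc n) \<le> inverse (real (Suc n2))"
      by (simp add: n_def divide_inverse le_imp_inverse_le)
    moreover have "norm ((A, u), w) \<le> real n" using n3 by (simp add: n_def)
    ultimately have "((A, u), w) \<in> K n" using n1 n2 h unfolding K_def by (auto simp: mem_cball_0)
    then show "(A, u) \<in> (\<Union>n. P n)" unfolding P_def by force
  qed
  have "negligible (\<Union>n. P n)" using negP by (intro negligible_countable_Union) auto
  then show ?thesis using sub negligible_subset by blast
qed



lemma negligible_proj_closed:
  fixes S :: "('a::euclidean_space \<times> 'b::euclidean_space) set"
  assumes cl: "closed S"
    and sub: "\<And>x s1 s2. x + s1 *\<^sub>R v \<in> fst ` S \<Longrightarrow> x + s2 *\<^sub>R v \<in> fst ` S \<Longrightarrow> s1 = s2"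
  shows "negligible (fst ` S)"
proof -
  define P where "P = (\<lambda>n::nat. fst ` (S \<inter> cball 0 (real n)))"
  have "negligible (P n)" for n
  proof (rule dir_null[where v = v])
    have "compact (S \<inter> cball 0 (real n))" by (rule closed_Int_compact[OF cl compact_cball])
    then have "compact (P n)" unfolding P_def
      by (intro compact_continuous_image continuous_intros)
    then show "P n \<in> sets borel" by (intro borel_closed compact_imp_closed)
  next
    fix x
    show "countable {s. x + s *\<^sub>R v \<in> P n}"
      by (rule countable_subsingleton) (use sub in \<open>auto simp: P_def\<close>)
  qed
  then have "negligible (\<Union>n. P n)" by (intro negligible_countable_Union) auto
  moreover have "fst ` S \<subseteq> (\<Union>n. P n)"
  proof
    fix x assume "x \<in> fst ` S"
    then obtain z where z: "z \<in> S" "x = fst z" by auto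
    obtain n where "norm z \<le> real n" using real_arch_simple by blast
    then have "z \<in> S \<inter> cball 0 (real n)" using z by (simp add: mem_cball_0)
    then show "x \<in> (\<Union>n. P n)" using z unfolding P_def by blast
  qed
  ultimately show ?thesis using negligible_subset by blast
qed

lemma negligible_inside_piece:
  fixes A :: "real^'n^'m"
  assumes r: "r > 0" and fr: "fullrank A" and jI: "j \<in> I" and cnz: "column j A \<noteq> 0"
  shows "negligible {u. \<exists>w. Fm r A w = A *v PI I u \<and> column j A \<bullet> w = 0}"
proof -
  define S where "S = {z :: (real^'n) \<times> (real^'m). Fm r A (snd z) = A *v PI I (fst z) \<and> column j A \<bullet> snd z = 0}"
  have eq: "{u. \<exists>w. Fm r A w = A *v PI I u \<and> column j A \<bullet> w = 0} = fst ` S"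
  proof
    show "{u. \<exists>w. Fm r A w = A *v PI I u \<and> column j A \<bullet> w = 0} \<subseteq> fst ` S"
    proof
      fix u assume "u \<in> {u. \<exists>w. Fm r A w = A *v PI I u \<and> column j A \<bullet> w = 0}"
      then obtain w where "Fm r A w = A *v PI I u" "column j A \<bullet> w = 0" by blast
      then have "(u, w) \<in> S" by (simp add: S_def)
      then show "u \<in> fst ` S" by (rule rev_image_eqI) simp
    qed
    show "fst ` S \<subseteq> {u. \<exists>w. Fm r A w = A *v PI I u \<and> column j A \<bullet> w = 0}"
      unfolding S_def by auto
  qed
  have cl: "closed S"
  proof -
    have c3: "continuous_on UNIV (\<lambda>z :: (real^'n) \<times> (real^'m). Fm r A (snd z))"
      using r by (intro Fm_cont continuous_intros)
    have c4: "continuous_on UNIV (\<lambda>z :: (real^'n) \<times> (real^'m). A *v PI I (fst z))"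
      unfolding matrix_vector_mult_def PI_def by (intro continuous_intros)
    have c5: "continuous_on UNIV (\<lambda>z :: (real^'n) \<times> (real^'m). column j A \<bullet> snd z)"
      by (intro continuous_intros)
    show ?thesis unfolding S_def
      using closed_Collect_eq[OF c3 c4] closed_Collect_eq[OF c5 continuous_on_const]
      by (intro closed_Collect_conj) auto
  qed
  define e where "e = (axis j 1 :: real^'n)"
  have PIe: "A *v PI I (x + s *\<^sub>R e) = A *v PI I x + s *\<^sub>R column j A" for x s
  proof -
    have "PI I (x + s *\<^sub>R e) = PI I x + s *\<^sub>R e"
      using jI by (simp add: PI_def e_def vec_eq_iff axis_def algebra_simps)
    moreover have "A *v e = column j A"
      by (simp add: e_def matrix_vector_mult_def column_def vec_eq_iff axis_def if_distrib cong: if_cong)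
    ultimately show ?thesis by (simp add: matrix_vector_right_distrib matrix_vector_mult_scaleR)
  qed
  have "negligible (fst ` S)"
  proof (rule negligible_proj_closed[OF cl, where v = e])
    fix x s1 s2
    assume "x + s1 *\<^sub>R e \<in> fst ` S" "x + s2 *\<^sub>R e \<in> fst ` S"
    then obtain z1 z2 where z: "z1 \<in> S" "fst z1 = x + s1 *\<^sub>R e" "z2 \<in> S" "fst z2 = x + s2 *\<^sub>R e"
      by (metis imageE)
    define w1 where "w1 = snd z1"
    define w2 where "w2 = snd z2"
    have w1: "Fm r A w1 = A *v PI I x + s1 *\<^sub>R column j A" "column j A \<bullet> w1 = 0"
      using z(1,2) PIe[of x s1] unfolding S_def w1_def by auto
    have w2: "Fm r A w2 = A *v PI I x + s2 *\<^sub>R column j A" "column j A \<bullet> w2 = 0"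
      using z(3,4) PIe[of x s2] unfolding S_def w2_def by auto
    have "(Fm r A w1 - Fm r A w2) \<bullet> (w1 - w2) = (s1 - s2) * (column j A \<bullet> (w1 - w2))"
      using w1(1) w2(1) by (simp add: algebra_simps)
    also have "\<dots> = 0" using w1(2) w2(2) by (simp add: inner_diff_right)
    finally have "w1 = w2" using Fm_mono_eq[OF r fr] by blast
    then have "s1 *\<^sub>R column j A = s2 *\<^sub>R column j A" using w1(1) w2(1) by auto
    then show "s1 = s2" using cnz by (metis scaleR_cancel_right)
  qed
  then show ?thesis unfolding eq .
qed

lemma negligible_zero_piece:
  fixes A :: "real^'n^'m"
  assumes "i0 \<in> I" "A$a$i0 \<noteq> 0"
  shows "negligible {u. A *v PI I u = 0}"
proof -
  define c where "c = (\<chi> b. A$a$b * (if b \<in> I then 1 else 0) :: real^'n)"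
  have "c \<noteq> 0" using assms by (auto simp: c_def vec_eq_iff intro!: exI[of _ i0])
  then have "negligible {u. c \<bullet> u = 0}" by (intro negligible_hyperplane) auto
  moreover have "{u. A *v PI I u = 0} \<subseteq> {u. c \<bullet> u = 0}"
  proof
    fix u assume "u \<in> {u. A *v PI I u = 0}"
    then have "(A *v PI I u)$a = 0" by simp
    moreover have "(A *v PI I u)$a = c \<bullet> u"
      by (simp add: c_def matrix_vector_mult_def PI_def inner_vec_def algebra_simps)
    ultimately show "u \<in> {u. c \<bullet> u = 0}" by simp
  qed
  ultimately show ?thesis using negligible_subset by blast
qed



lemma ortho_proj_exists:
  fixes V :: "'a::euclidean_space set"
  assumes "subspace V"
  obtains M where "linear M" "\<And>z. M z \<in> V\<^sup>\<bottom>" "\<And>z. z \<in> V\<^sup>\<bottom> \<Longrightarrow> M z = z"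
proof -
  obtain B where B: "B \<subseteq> V" "pairwise orthogonal B" "\<And>x. x \<in> B \<Longrightarrow> norm x = 1"
    "independent B" "span B = V"
    using orthonormal_basis_subspace[OF assms] by metis
  then have fB: "finite B" using independent_imp_finite by blast
  have ob: "\<forall>x\<in>B. \<forall>y\<in>B. x \<bullet> y = (if x = y then 1 else 0)"
    using B(2,3) norm_eq_1 by (auto simp: orthogonal_def pairwise_def)
  define M where "M = (\<lambda>z. z - (\<Sum>b\<in>B. (z \<bullet> b) *\<^sub>R b))"
  have lin: "linear M" unfolding M_def
    by (intro linearI) (auto simp: inner_add_left algebra_simps sum.distrib scaleR_sum_right)
  have orth: "M z \<in> V\<^sup>\<bottom>" for z
    unfolding orthogonal_comp_def orthogonal_def mem_Collect_eq
  proof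
    fix y assume "y \<in> V"
    with B(5) span_finite[OF fB] obtain u where u: "y = (\<Sum>b\<in>B. u b *\<^sub>R b)" by auto
    have "b \<bullet> M z = 0" if "b \<in> B" for b
      using that fB
      by (simp add: M_def ob algebra_simps inner_sum_right if_distrib [of "(*)v" for v] inner_commute cong: if_cong)
    then show "y \<bullet> M z = 0" by (simp add: u inner_sum_left)
  qed
  have fix_: "M z = z" if "z \<in> V\<^sup>\<bottom>" for z
  proof -
    have "z \<bullet> b = 0" if "b \<in> B" for b
      using \<open>z \<in> V\<^sup>\<bottom>\<close> B(1) that by (auto simp: orthogonal_comp_def orthogonal_def inner_commute)
    then show ?thesis by (simp add: M_def)
  qed
  show ?thesis using that lin orth fix_ by blast
qed

lemma transfer_null:
  fixes L :: "real^'n \<Rightarrow> real^'m"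
  assumes lin: "linear L" and neg: "negligible {u. \<not> P (L u)}"
  shows "subspace_null (range L) {y \<in> range L. \<not> P y}"
proof -
  define V where "V = range L"
  define B where "B = {y \<in> V. \<not> P y}"
  have sV: "subspace V" unfolding V_def using linear_subspace_image[OF lin subspace_UNIV] by simp
  obtain M where M: "linear M" "\<And>z. M z \<in> V\<^sup>\<bottom>" "\<And>z. z \<in> V\<^sup>\<bottom> \<Longrightarrow> M z = z"
    using ortho_proj_exists[OF sV] by blast
  define C where "C = {b + w | b w. b \<in> B \<and> w \<in> V\<^sup>\<bottom>}"
  define \<Psi> where "\<Psi> = (\<lambda>(u::real^'n, z::real^'m). L u + M z)"
  have lPsi: "linear \<Psi>" unfolding \<Psi>_def case_prod_beta using lin M(1)
    by (intro linearI) (auto simp: linear_add linear_cmul algebra_simps)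
  have sPsi: "surj \<Psi>"
  proof -
    have "y \<in> range \<Psi>" for y
    proof -
      have "y \<in> V + V\<^sup>\<bottom>" using subspace_sum_orthogonal_comp[OF sV] by simp
      then obtain v w where vw: "v \<in> V" "w \<in> V\<^sup>\<bottom>" "y = v + w" by (meson set_plus_elim)
      obtain u where "v = L u" using vw(1) unfolding V_def by blast
      then have "\<Psi> (u, w) = y" using vw M(3) by (simp add: \<Psi>_def)
      then show ?thesis by (metis rangeI)
    qed
    then show ?thesis by blast
  qed
  have pre: "\<Psi> -` C = {u. \<not> P (L u)} \<times> UNIV"
  proof (intro set_eqI iffI)
    fix x assume "x \<in> \<Psi> -` C"
    obtain u :: "real^'n" and z :: "real^'m" where x: "x = (u, z)" by fastforce
    then obtain b w where bw: "L u + M z = b + w" "b \<in> B" "w \<in> V\<^sup>\<bottom>"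
      using \<open>x \<in> \<Psi> -` C\<close> unfolding C_def \<Psi>_def by auto
    have "L u - b = w - M z" using bw(1) by (simp add: algebra_simps)
    moreover have "L u - b \<in> V" using bw(2) sV unfolding B_def V_def
      by (auto intro: subspace_diff)
    moreover have "w - M z \<in> V\<^sup>\<bottom>" using bw(3) M(2) subspace_orthogonal_comp
      by (blast intro: subspace_diff)
    ultimately have "L u - b \<in> V \<inter> V\<^sup>\<bottom>" by simp
    then have "L u = b" using orthogonal_Int_0[OF sV] by simp
    then show "x \<in> {u. \<not> P (L u)} \<times> UNIV" using bw(2) x unfolding B_def by simp
  next
    fix x :: "(real^'n) \<times> (real^'m)" assume "x \<in> {u. \<not> P (L u)} \<times> (UNIV :: (real^'m) set)"
    then obtain u z where x: "x = (u, z)" "\<not> P (L u)" by auto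
    have "L u \<in> B" using x(2) unfolding B_def V_def by simp
    then have "L u + M z \<in> C" unfolding C_def using M(2) by blast
    then show "x \<in> \<Psi> -` C" using x(1) by (simp add: \<Psi>_def)
  qed
  have negpre: "negligible (\<Psi> -` C)" unfolding pre by (rule negligible_Times_UNIV[OF neg])
  have "negligible C"
    by (rule surj_lin_negligible[OF lPsi sPsi _ negpre, where 'c = "real^'n"]) simp
  then show ?thesis
    unfolding subspace_null_def V_def[symmetric] B_def[symmetric] C_def[symmetric]
    by (simp add: B_def negligible_iff_null_sets)
qed

lemma col_range_eq:
  fixes A :: "real^'n^'m"
  shows "col_range A I = range (\<lambda>u. A *v PI I u)"
proof
  have P1: "PI I (x + y) = PI I x + PI I y" for x y by (simp add: PI_def vec_eq_iff algebra_simps)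
  have P2: "PI I (c *\<^sub>R x) = c *\<^sub>R PI I x" for c x by (simp add: PI_def vec_eq_iff algebra_simps)
  have lin: "linear (\<lambda>u. A *v PI I u)"
    by (intro linearI) (simp_all add: P1 P2 matrix_vector_right_distrib matrix_vector_mult_scaleR)
  have sub: "subspace (range (\<lambda>u. A *v PI I u))"
    using linear_subspace_image[OF lin subspace_UNIV] by simp
  show "col_range A I \<subseteq> range (\<lambda>u. A *v PI I u)"
    unfolding col_range_def
  proof (rule span_minimal[OF _ sub])
    show "{column j A |j. j \<in> I} \<subseteq> range (\<lambda>u. A *v PI I u)"
    proof clarify
      fix j assume "j \<in> I"
      then have "PI I (axis j 1) = axis j 1" by (simp add: PI_def vec_eq_iff axis_def)
      then have "A *v PI I (axis j 1) = column j A" by (simp add: matrix_vector_mult_basis)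
      then show "column j A \<in> range (\<lambda>u. A *v PI I u)" by (metis rangeI)
    qed
  qed
  show "range (\<lambda>u. A *v PI I u) \<subseteq> col_range A I"
  proof clarify
    fix u
    have "A *v PI I u = (\<Sum>j\<in>UNIV. (PI I u $ j) *\<^sub>R column j A)"
      by (simp add: matrix_mult_sum scalar_mult_eq_scaleR)
    also have "\<dots> \<in> col_range A I"
      unfolding col_range_def
    proof (intro span_sum)
      fix j
      show "(PI I u $ j) *\<^sub>R column j A \<in> span {column j A |j. j \<in> I}"
      proof (cases "j \<in> I")
        case True
        then show ?thesis by (intro span_mul span_base) auto
      next
        case False
        then show ?thesis by (simp add: PI_def span_zero)
      qed
    qed
    finally show "A *v PI I u \<in> col_range A I" .
  qed
qed



lemma AE_section_negligible:
  fixes E :: "('a::euclidean_space \<times> 'b::euclidean_space) set"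
  assumes "negligible E"
  shows "AE x in lborel. negligible {y. (x, y) \<in> E}"
proof -
  have "AE z in lborel. z \<notin> E" using assms unfolding neg_AE .
  then have "AE z in (lborel \<Otimes>\<^sub>M lborel). z \<notin> E" unfolding lborel_prod .
  then have "AE x in lborel. AE y in (lborel::'b measure). (x, y) \<notin> E"
    by (rule lborel_pair.AE_pair)
  then show ?thesis by (rule eventually_mono) (simp add: neg_AE)
qed

lemma exists_inj_avoid:
  assumes "CARD('m::finite) \<le> CARD('n::finite) - 1"
  shows "\<exists>\<tau>::'m \<Rightarrow> 'n. inj \<tau> \<and> j \<notin> range \<tau>"
proof -
  have "card (UNIV::'m set) \<le> card (UNIV - {j} :: 'n set)" using assms by simp
  then obtain f where "f ` (UNIV::'m set) \<subseteq> UNIV - {j}" "inj_on f UNIV"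
    using card_le_inj[of "UNIV::'m set" "UNIV - {j} :: 'n set"] by auto
  then show ?thesis by (intro exI[of _ f]) auto
qed

lemma exists_inj:
  assumes "CARD('m::finite) \<le> CARD('n::finite)"
  shows "\<exists>\<tau>::'m \<Rightarrow> 'n. inj \<tau>"
proof -
  obtain f where "f ` (UNIV::'m set) \<subseteq> (UNIV :: 'n set)" "inj_on f UNIV"
    using card_le_inj[of "UNIV::'m set" "UNIV :: 'n set"] assms by auto
  then show ?thesis by blast
qed

lemma bad_cover:
  fixes A :: "real^'n^'m" and I :: "'n set" and tau :: "'n \<Rightarrow> 'm \<Rightarrow> 'n"
  assumes p: "p > 1" and fr: "fullrank A"
    and taus: "\<And>j. j \<notin> I \<Longrightarrow> det (Msub (tau j) A) \<noteq> 0"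
    and bad: "\<not> good p A (A *v PI I u)"
  shows "A *v PI I u = 0
       \<or> (\<exists>j\<in>I. u \<in> {u. \<exists>w. Fm (1/(p-1)) A w = A *v PI I u \<and> column j A \<bullet> w = 0})
       \<or> (\<exists>j k. j \<notin> I \<and> (A, u) \<in> {(A :: real^'n^'m, u :: real^'n). det (Msub (tau j) A) \<noteq> 0 \<and>
            (\<exists>w. Fm (1/(p-1)) A w = A *v PI I u \<and> column j A \<bullet> w = 0 \<and> w$k \<noteq> 0)})"
proof -
  define r where "r = 1/(p-1)"
  have r: "r > 0" using p by (simp add: r_def)
  obtain w where w: "Fm r A w = A *v PI I u" using Fm_surj[OF r fr] by blast
  have "\<exists>j. column j A \<bullet> w = 0"
  proof (rule ccontr)
    assume "\<not> (\<exists>j. column j A \<bullet> w = 0)"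
    then have "good p A (Fm r A w)" unfolding r_def by (intro KKT_good[OF p]) auto
    then show False using bad w by simp
  qed
  then obtain j where j: "column j A \<bullet> w = 0" by blast
  show ?thesis
  proof (cases "A *v PI I u = 0")
    case False
    have F0: "Fm r A 0 = 0" by (simp add: Fm_def vec_eq_iff matrix_vector_mult_def)
    then have "w \<noteq> 0" using w False by auto
    then obtain k where k: "w$k \<noteq> 0" by (auto simp: vec_eq_iff)
    show ?thesis
    proof (cases "j \<in> I")
      case True
      then show ?thesis using w j unfolding r_def by blast
    next
      case False
      then show ?thesis using w j k taus[OF False] unfolding r_def by blast
    qed
  qed simp
qed

theorem main_result:
  fixes p :: real and I :: "'n::finite set"
  assumes p: "p > 1"
    and NM: "CARD('n) \<ge> 2 * CARD('m::finite) - 1"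
    and I: "I \<noteq> {}"
  shows "\<exists>S :: (real ^ 'n ^ 'm) set.
           (UNIV - S) \<in> null_sets lebesgue \<and>
           (\<forall>A\<in>S. ae_subspace (col_range A I)
              (\<lambda>y. \<exists>x. lp_optimal p A y x \<and> (\<forall>x'. lp_optimal p A y x' \<longrightarrow> x' = x)
                        \<and> card (supp x) = CARD('n)))"
proof -
  define r where "r = 1/(p-1)"
  have r: "r > 0" using p by (simp add: r_def)
  have m1: "CARD('m) \<ge> 1" by (simp add: Suc_le_eq)
  have "CARD('m) \<le> CARD('n)" using NM m1 by linarith
  then obtain \<tau>0 :: "'m \<Rightarrow> 'n" where t0: "inj \<tau>0" using exists_inj by blast
  have avoid: "\<exists>\<tau>::'m \<Rightarrow> 'n. inj \<tau> \<and> j \<notin> range \<tau>" if "j \<notin> I" for j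
  proof -
    obtain i0 where "i0 \<in> I" using I by blast
    then have "i0 \<noteq> j" using that by blast
    then have "card {i0, j} \<le> CARD('n)" by (intro card_mono) auto
    then have "CARD('n) \<ge> 2" using \<open>i0 \<noteq> j\<close> by simp
    then have "CARD('m) \<le> CARD('n) - 1" using NM m1 by linarith
    then show ?thesis by (rule exists_inj_avoid)
  qed
  define tau where "tau = (\<lambda>j. SOME \<tau>::'m \<Rightarrow> 'n. inj \<tau> \<and> j \<notin> range \<tau>)"
  have tau: "inj (tau j) \<and> j \<notin> range (tau j)" if "j \<notin> I" for j
    unfolding tau_def using someI_ex[OF avoid[OF that]] .
  define a0 :: 'm where "a0 = undefined"
  define G0 where "G0 = {A :: real^'n^'m. det (Msub \<tau>0 A) \<noteq> 0 \<and>
       (\<forall>j\<in>-I. det (Msub (tau j) A) \<noteq> 0) \<and> (\<forall>i\<in>I. A$a0$i \<noteq> 0)}"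
  have "negligible (UNIV - G0)"
  proof -
    have "UNIV - G0 \<subseteq> {A. det (Msub \<tau>0 A) = 0} \<union> (\<Union>j\<in>-I. {A. det (Msub (tau j) A) = 0})
                      \<union> (\<Union>i\<in>I. {A. A$a0$i = 0})"
      unfolding G0_def by auto
    moreover have "negligible ({A :: real^'n^'m. det (Msub \<tau>0 A) = 0} \<union> (\<Union>j\<in>-I. {A. det (Msub (tau j) A) = 0})
                      \<union> (\<Union>i\<in>I. {A. A$a0$i = 0}))"
      using negligible_det_zero[OF t0] negligible_det_zero[OF tau[THEN conjunct1]] negligible_entry_zero
      by (intro negligible_Un negligible_Union) auto
    ultimately show ?thesis using negligible_subset by blast
  qed
  then have aeG0: "AE A in lborel. A \<in> G0" unfolding neg_AE by simp
  define E where "E = (\<lambda>(j, k). {(A :: real^'n^'m, u :: real^'n). det (Msub (tau j) A) \<noteq> 0 \<and>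
            (\<exists>w. Fm r A w = A *v PI I u \<and> column j A \<bullet> w = 0 \<and> w$k \<noteq> 0)})"
  have negE: "negligible (E (j, k))" if "j \<notin> I" for j k
    unfolding E_def using negligible_outside_piece[OF r that tau[OF that, THEN conjunct2]] by simp
  have "\<forall>jk\<in>(UNIV :: ('n \<times> 'm) set). AE A in lborel. fst jk \<notin> I \<longrightarrow> negligible {u. (A, u) \<in> E jk}"
  proof
    fix jk :: "'n \<times> 'm"
    obtain j k where jk: "jk = (j, k)" by fastforce
    show "AE A in lborel. fst jk \<notin> I \<longrightarrow> negligible {u. (A, u) \<in> E jk}"
    proof (cases "j \<in> I")
      case True then show ?thesis using jk by simp
    next
      case False
      then show ?thesis using AE_section_negligible[OF negE[OF False, of k]] jk
        by (auto elim: eventually_mono)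
    qed
  qed
  then have aeE: "AE A in lborel. \<forall>jk\<in>(UNIV :: ('n \<times> 'm) set). fst jk \<notin> I \<longrightarrow> negligible {u. (A, u) \<in> E jk}"
    by (subst AE_ball_countable) auto
  define S where "S = {A :: real^'n^'m. negligible {u. \<not> good p A (A *v PI I u)}}"
  have aeS: "AE A in lborel. A \<in> S"
    using aeG0 aeE
  proof (eventually_elim)
    case (elim A)
    have fr: "fullrank A" using elim(1) det_fullrank unfolding G0_def by blast
    have taus: "det (Msub (tau j) A) \<noteq> 0" if "j \<notin> I" for j using elim(1) that unfolding G0_def by blast
    obtain i0 where i0: "i0 \<in> I" using I by blast
    have n1: "negligible {u. A *v PI I u = 0}"
      using negligible_zero_piece[OF i0, of A a0] elim(1) i0 unfolding G0_def by blast
    have n2: "negligible {u. \<exists>w. Fm r A w = A *v PI I u \<and> column j A \<bullet> w = 0}" if "j \<in> I" for j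
    proof -
      have "column j A \<noteq> 0" using elim(1) that unfolding G0_def by (auto simp: column_def vec_eq_iff)
      then show ?thesis using negligible_inside_piece[OF r fr that] by blast
    qed
    have n3: "negligible {u. (A, u) \<in> E (j, k)}" if "j \<notin> I" for j k
      using elim(2) that by auto
    have "{u. \<not> good p A (A *v PI I u)} \<subseteq> {u. A *v PI I u = 0}
         \<union> (\<Union>j\<in>I. {u. \<exists>w. Fm r A w = A *v PI I u \<and> column j A \<bullet> w = 0})
         \<union> (\<Union>jk\<in>(-I) \<times> UNIV. {u. (A, u) \<in> E jk})"
    proof
      fix u assume "u \<in> {u. \<not> good p A (A *v PI I u)}"
      then have "\<not> good p A (A *v PI I u)" by simp
      have "A *v PI I u = 0 \<or> (\<exists>j\<in>I. u \<in> {u. \<exists>w. Fm r A w = A *v PI I u \<and> column j A \<bullet> w = 0})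
          \<or> (\<exists>j k. j \<notin> I \<and> (A, u) \<in> E (j, k))"
        using bad_cover[where tau = tau, OF p fr taus \<open>\<not> good p A (A *v PI I u)\<close>]
        unfolding E_def r_def by simp
      then show "u \<in> {u. A *v PI I u = 0}
         \<union> (\<Union>j\<in>I. {u. \<exists>w. Fm r A w = A *v PI I u \<and> column j A \<bullet> w = 0})
         \<union> (\<Union>jk\<in>(-I) \<times> UNIV. {u. (A, u) \<in> E jk})"
        by blast
    qed
    moreover have "negligible ({u. A *v PI I u = 0}
         \<union> (\<Union>j\<in>I. {u. \<exists>w. Fm r A w = A *v PI I u \<and> column j A \<bullet> w = 0})
         \<union> (\<Union>jk\<in>(-I) \<times> UNIV. {u. (A, u) \<in> E jk}))"
      using n1 n2 n3 by (intro negligible_Un negligible_Union) auto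
    ultimately show ?case unfolding S_def using negligible_subset by blast
  qed
  have "negligible (UNIV - S)" using aeS unfolding neg_AE by simp
  then have nullS: "(UNIV - S) \<in> null_sets lebesgue" by (simp add: negligible_iff_null_sets)
  have "ae_subspace (col_range A I) (good p A)" if "A \<in> S" for A
  proof -
    have lin: "linear (\<lambda>u. A *v PI I u)"
    proof -
      have P1: "PI I (x + y) = PI I x + PI I y" for x y by (simp add: PI_def vec_eq_iff algebra_simps)
      have P2: "PI I (c *\<^sub>R x) = c *\<^sub>R PI I x" for c x by (simp add: PI_def vec_eq_iff algebra_simps)
      show ?thesis
        by (intro linearI) (simp_all add: P1 P2 matrix_vector_right_distrib matrix_vector_mult_scaleR)
    qed
    have "negligible {u. \<not> good p A (A *v PI I u)}" using that unfolding S_def by simp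
    from transfer_null[OF lin this] show ?thesis
      unfolding ae_subspace_def col_range_eq .
  qed
  then show ?thesis using nullS unfolding good_def by blast
qed


theorem theorem5p1:
  fixes p :: real and I :: "'n::finite set"
  assumes "p > 1"
    and "CARD('n) \<ge> 2 * CARD('m::finite) - 1"
    and "I \<noteq> {}"
  shows "\<exists>S :: (real ^ 'n ^ 'm) set.
           (UNIV - S) \<in> null_sets lebesgue \<and>
           (\<forall>A\<in>S. ae_subspace (col_range A I)
              (\<lambda>y. \<exists>x. lp_optimal p A y x \<and> (\<forall>x'. lp_optimal p A y x' \<longrightarrow> x' = x)
                        \<and> card (supp x) = CARD('n)))"
  using main_result[OF assms] .

end
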